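(* For every tree $T$, the skew token sliding graph $\mathcal{Z}^{\mathrm{TS}}_-(T)$ contains no edges.
   Context: Skew forcing: vertices are colored blue or white; if any vertex $u$ (blue or white) has exactly one white neighbor $v$, then $u$ may force $v$ to become blue. A skew forcing set is a (possibly empty) set of initially blue vertices from which repeated application of this rule turns every vertex blue; $\mathrm{Z}_-(G)$ is the minimum size of a skew forcing set. $\mathcal{Z}^{\mathrm{TS}}_-(G)$ has as vertices the minimum skew forcing sets of $G$, with $S_1S_2$ an edge iff $S_1\setminus S_2=\{v_1\}$, $S_2\setminus S_1=\{v_2\}$ and $v_1v_2\in E(G)$. *)

theory Defs
  imports Main
begin

definition simple_graph :: "'a set \<Rightarrow> ('a \<Rightarrow> 'a \<Rightarrow> bool) \<Rightarrow> bool" where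
  "simple_graph V E \<longleftrightarrow> finite V \<and> (\<forall>u v. E u v \<longrightarrow> u \<in> V \<and> v \<in> V)
     \<and> (\<forall>u v. E u v \<longrightarrow> E v u) \<and> (\<forall>u. \<not> E u u)"

definition connected_graph :: "'a set \<Rightarrow> ('a \<Rightarrow> 'a \<Rightarrow> bool) \<Rightarrow> bool" where
  "connected_graph V E \<longleftrightarrow> (\<forall>u\<in>V. \<forall>v\<in>V. E\<^sup>*\<^sup>* u v)"

definition has_cycle :: "'a set \<Rightarrow> ('a \<Rightarrow> 'a \<Rightarrow> bool) \<Rightarrow> bool" where
  "has_cycle V E \<longleftrightarrow> (\<exists>cs. length cs \<ge> 3 \<and> distinct cs \<and> set cs \<subseteq> V
     \<and> (\<forall>i. Suc i < length cs \<longrightarrow> E (cs ! i) (cs ! Suc i))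
     \<and> E (last cs) (hd cs))"

definition tree :: "'a set \<Rightarrow> ('a \<Rightarrow> 'a \<Rightarrow> bool) \<Rightarrow> bool" where
  "tree V E \<longleftrightarrow> simple_graph V E \<and> V \<noteq> {} \<and> connected_graph V E \<and> \<not> has_cycle V E"

text \<open>Set of vertices that end up blue starting from S under the skew forcing rule:
  any vertex u (blue or white) all of whose neighbours other than v are blue
  may force its neighbour v.\<close>
inductive_set skew_closure :: "'a set \<Rightarrow> ('a \<Rightarrow> 'a \<Rightarrow> bool) \<Rightarrow> 'a set \<Rightarrow> 'a set"
  for V E S where
  init: "v \<in> S \<Longrightarrow> v \<in> skew_closure V E S"
| force: "\<lbrakk>u \<in> V; E u v; \<forall>w. E u w \<and> w \<noteq> v \<longrightarrow> w \<in> skew_closure V E S\<rbrakk>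
           \<Longrightarrow> v \<in> skew_closure V E S"

definition skew_forcing_set :: "'a set \<Rightarrow> ('a \<Rightarrow> 'a \<Rightarrow> bool) \<Rightarrow> 'a set \<Rightarrow> bool" where
  "skew_forcing_set V E S \<longleftrightarrow> S \<subseteq> V \<and> V \<subseteq> skew_closure V E S"

definition skew_zero_forcing_number :: "'a set \<Rightarrow> ('a \<Rightarrow> 'a \<Rightarrow> bool) \<Rightarrow> nat" where
  "skew_zero_forcing_number V E = Min (card ` {S. skew_forcing_set V E S})"

definition min_skew_forcing_set :: "'a set \<Rightarrow> ('a \<Rightarrow> 'a \<Rightarrow> bool) \<Rightarrow> 'a set \<Rightarrow> bool" where
  "min_skew_forcing_set V E S \<longleftrightarrow> skew_forcing_set V E S
     \<and> card S = skew_zero_forcing_number V E"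

definition skew_TS_edge :: "'a set \<Rightarrow> ('a \<Rightarrow> 'a \<Rightarrow> bool) \<Rightarrow> 'a set \<Rightarrow> 'a set \<Rightarrow> bool" where
  "skew_TS_edge V E S1 S2 \<longleftrightarrow> min_skew_forcing_set V E S1 \<and> min_skew_forcing_set V E S2
     \<and> (\<exists>v1 v2. S1 - S2 = {v1} \<and> S2 - S1 = {v2} \<and> E v1 v2)"

end

theory Submission
  imports Defs
begin
lemma closure_mono:
  assumes "A \<subseteq> B"
  shows "skew_closure V E A \<subseteq> skew_closure V E B"
proof
  fix x assume "x \<in> skew_closure V E A"
  then show "x \<in> skew_closure V E B"
  proof (induction rule: skew_closure.induct)
    case (init v) then show ?case using assms by (auto intro: skew_closure.init)
  next
    case (force u v) then show ?case by (auto intro: skew_closure.force)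
  qed
qed
lemma stall:
  assumes "u \<in> V" "E u v" "v \<notin> skew_closure V E S"
  shows "\<exists>w. E u w \<and> w \<noteq> v \<and> w \<notin> skew_closure V E S"
  using assms skew_closure.force[of u V E v S] by blast
lemma first_force:
  assumes "V \<subseteq> skew_closure V E B" "\<not> V \<subseteq> B"
  shows "\<exists>u v. u \<in> V \<and> E u v \<and> v \<notin> B \<and> (\<forall>w. E u w \<and> w \<noteq> v \<longrightarrow> w \<in> B)"
proof (rule ccontr)
  assume H: "\<not> ?thesis"
  have "skew_closure V E B \<subseteq> B"
  proof
    fix x assume "x \<in> skew_closure V E B"
    then show "x \<in> B"
    proof (induction rule: skew_closure.induct)
      case (init v) then show ?case .
    next
      case (force u v)
      show ?case
      proof (rule ccontr)
        assume "v \<notin> B"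
        then have "\<exists>u v. u \<in> V \<and> E u v \<and> v \<notin> B \<and> (\<forall>w. E u w \<and> w \<noteq> v \<longrightarrow> w \<in> B)"
          using force by blast
        then show False using H by blast
      qed
    qed
  qed
  then show False using assms by blast
qed
lemma cycle_lemma:
  assumes fin: "finite V" and EV: "\<forall>x y. E x y \<longrightarrow> x \<in> V \<and> y \<in> V"
    and irr: "\<forall>x. \<not> E x x"
    and HE: "\<forall>x y. H x y \<longrightarrow> E x y" and ab: "H a b"
    and step: "\<forall>x y. H x y \<longrightarrow> (\<exists>z. H y z \<and> z \<noteq> x)"
  shows "has_cycle V E"
proof -
  define nxt where "nxt = (\<lambda>(x::'a, y::'a). (y, SOME z. H y z \<and> z \<noteq> x))"
  define p where "p n = (nxt ^^ n) (a, b)" for n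
  have pH: "H (fst (p n)) (snd (p n))" for n
  proof (induction n)
    case 0 then show ?case using ab by (simp add: p_def)
  next
    case (Suc n)
    have "p (Suc n) = nxt (p n)" by (simp add: p_def)
    moreover have "H (snd (p n)) (SOME z. H (snd (p n)) z \<and> z \<noteq> fst (p n))"
      using someI_ex[OF step[rule_format, OF Suc]] by blast
    ultimately show ?case by (simp add: nxt_def split: prod.splits)
  qed
  have pS: "p (Suc n) = (snd (p n), SOME z. H (snd (p n)) z \<and> z \<noteq> fst (p n))" for n
    by (simp add: p_def nxt_def split: prod.splits)
  define s where "s n = fst (p n)" for n
  have sS: "s (Suc n) = snd (p n)" for n using pS by (simp add: s_def)
  have sE: "E (s n) (s (Suc n))" for n using pH HE sS s_def by metis
  have sNB: "s (Suc (Suc n)) \<noteq> s n" for n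
  proof -
    have "s (Suc (Suc n)) = (SOME z. H (snd (p n)) z \<and> z \<noteq> fst (p n))"
      using pS by (simp add: s_def)
    moreover have "(SOME z. H (snd (p n)) z \<and> z \<noteq> fst (p n)) \<noteq> fst (p n)"
      using someI_ex[OF step[rule_format, OF pH[of n]]] by blast
    ultimately show ?thesis by (simp add: s_def)
  qed
  have sV: "s n \<in> V" for n using sE EV by blast
  have "\<not> inj s"
  proof
    assume "inj s"
    then have "infinite (range s)" using finite_imageD by blast
    moreover have "range s \<subseteq> V" using sV by blast
    ultimately show False using fin finite_subset by blast
  qed
  then obtain i j where ij: "i < j" "s i = s j"
    by (metis injI linorder_neqE_nat)
  define P where "P d = (\<exists>i. 0 < d \<and> s (i + d) = s i)" for d
  have "P (j - i)" unfolding P_def using ij by (rule_tac x=i in exI) simp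
  define d where "d = (LEAST d. P d)"
  have Pd: "P d" unfolding d_def using \<open>P (j - i)\<close> by (rule LeastI)
  have dmin: "\<And>d'. P d' \<Longrightarrow> d \<le> d'" unfolding d_def by (rule Least_le)
  obtain i0 where i0: "0 < d" "s (i0 + d) = s i0" using Pd P_def by blast
  have d1: "d \<noteq> 1" using i0 sE[of i0] irr by auto
  have d2: "d \<noteq> 2"
  proof
    assume "d = 2"
    then have "s (Suc (Suc i0)) = s i0" using i0 by (simp add: numeral_2_eq_2)
    then show False using sNB[of i0] by simp
  qed
  have d3: "d \<ge> 3" using d1 d2 i0(1) by linarith
  define cs where "cs = map (\<lambda>k. s (i0 + k)) [0..<d]"
  have "distinct cs"
    unfolding cs_def distinct_map
  proof
    show "distinct [0..<d]" by simp
    show "inj_on (\<lambda>k. s (i0 + k)) (set [0..<d])"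
    proof (rule inj_onI)
      fix k l assume kl: "k \<in> set [0..<d]" "l \<in> set [0..<d]" "s (i0 + k) = s (i0 + l)"
      show "k = l"
      proof (rule ccontr)
        assume "k \<noteq> l"
        then consider "k < l" | "l < k" by linarith
        then show False
        proof cases
          case 1
          have "P (l - k)" unfolding P_def using 1 kl
            by (rule_tac x="i0 + k" in exI) (simp add: add.assoc)
          then show False using dmin[of "l - k"] kl 1 by auto
        next
          case 2
          have "P (k - l)" unfolding P_def using 2 kl
            by (rule_tac x="i0 + l" in exI) (simp add: add.assoc)
          then show False using dmin[of "k - l"] kl 2 by auto
        qed
      qed
    qed
  qed
  moreover have "length cs \<ge> 3" using d3 by (simp add: cs_def)
  moreover have "set cs \<subseteq> V" using sV by (auto simp: cs_def)
  moreover have "\<forall>k. Suc k < length cs \<longrightarrow> E (cs ! k) (cs ! Suc k)"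
    using sE by (auto simp: cs_def)
  moreover have "E (last cs) (hd cs)"
  proof -
    have "last cs = s (i0 + (d - 1))" using d3 by (simp add: cs_def last_map)
    moreover have "hd cs = s (i0 + d)" using d3 i0 by (simp add: cs_def hd_map)
    moreover have "Suc (i0 + (d - 1)) = i0 + d" using d3 by simp
    ultimately show ?thesis using sE[of "i0 + (d - 1)"] by simp
  qed
  ultimately show ?thesis unfolding has_cycle_def by blast
qed


definition matching_rel :: "('a \<Rightarrow> 'a \<Rightarrow> bool) \<Rightarrow> ('a \<Rightarrow> 'a \<Rightarrow> bool) \<Rightarrow> bool" where
  "matching_rel E M \<longleftrightarrow> (\<forall>x y. M x y \<longrightarrow> E x y) \<and> (\<forall>x y. M x y \<longrightarrow> M y x)
     \<and> (\<forall>x y z. M x y \<longrightarrow> M x z \<longrightarrow> y = z)"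

lemma forcing_matching:
  assumes sg: "simple_graph V E"
  shows "V \<subseteq> skew_closure V E B \<Longrightarrow> \<exists>M. matching_rel E M \<and> (\<forall>x \<in> V - B. \<exists>y. M x y)
           \<and> (\<forall>x y. M x y \<longrightarrow> x \<notin> B \<or> y \<notin> B)"
proof (induction "card (V - B)" arbitrary: B rule: less_induct)
  case less
  have fin: "finite V" and EV: "\<forall>x y. E x y \<longrightarrow> x \<in> V \<and> y \<in> V"
    and sym: "\<forall>x y. E x y \<longrightarrow> E y x" and irr: "\<forall>x. \<not> E x x"
    using sg unfolding simple_graph_def by auto
  show ?case
  proof (cases "V \<subseteq> B")
    case True
    show ?thesis
      by (rule exI[of _ "\<lambda>x y. False"]) (use True in \<open>auto simp: matching_rel_def\<close>)
  next
    case False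
    obtain u v where uv: "u \<in> V" "E u v" "v \<notin> B" "\<forall>w. E u w \<and> w \<noteq> v \<longrightarrow> w \<in> B"
      using first_force[OF less.prems False] by blast
    have vV: "v \<in> V" using uv EV by blast
    have lt: "card (V - insert v B) < card (V - B)"
      using fin vV uv(3) by (intro psubset_card_mono) auto
    have "V \<subseteq> skew_closure V E (insert v B)"
      using less.prems closure_mono[of B "insert v B" V E] by blast
    then obtain M where M: "matching_rel E M" "\<forall>x \<in> V - insert v B. \<exists>y. M x y"
        "\<forall>x y. M x y \<longrightarrow> x \<notin> insert v B \<or> y \<notin> insert v B"
      using less.hyps[OF lt] by blast
    show ?thesis
    proof (cases "\<exists>y. M v y")
      case True
      then show ?thesis using M by (intro exI[of _ M]) auto
    next
      case vfree: False
      define M' where "M' x y \<longleftrightarrow> (M x y \<and> x \<noteq> u \<and> y \<noteq> u) \<or> (x = u \<and> y = v) \<or> (x = v \<and> y = u)" for x y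
      have ME: "\<forall>x y. M x y \<longrightarrow> E x y" and Msym: "\<forall>x y. M x y \<longrightarrow> M y x"
        and Mun: "\<forall>x y z. M x y \<longrightarrow> M x z \<longrightarrow> y = z"
        using M(1) unfolding matching_rel_def by auto
      have "E v u" using uv(2) sym by blast
      have "matching_rel E M'"
        unfolding matching_rel_def
      proof (intro conjI allI impI)
        fix x y assume "M' x y" then show "E x y"
          using ME uv(2) \<open>E v u\<close> unfolding M'_def by blast
      next
        fix x y assume "M' x y" then show "M' y x"
          using Msym unfolding M'_def by blast
      next
        fix x y z assume "M' x y" "M' x z" then show "y = z"
          using Mun Msym vfree unfolding M'_def by blast
      qed
      moreover have "\<forall>x \<in> V - B. \<exists>y. M' x y"
      proof
        fix x assume x: "x \<in> V - B"
        show "\<exists>y. M' x y"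
        proof (cases "x = u \<or> x = v")
          case True then show ?thesis unfolding M'_def by blast
        next
          case False
          then obtain y where y: "M x y" using M(2) x by blast
          have "y \<noteq> u"
          proof
            assume "y = u"
            then have "M u x" using M(1) y unfolding matching_rel_def by blast
            then have "E u x" using M(1) unfolding matching_rel_def by blast
            then show False using uv(4) x False by blast
          qed
          then show ?thesis using y False unfolding M'_def by blast
        qed
      qed
      moreover have "\<forall>x y. M' x y \<longrightarrow> x \<notin> B \<or> y \<notin> B"
        using M(3) uv(3) unfolding M'_def by blast
      ultimately show ?thesis by blast
    qed
  qed
qed

lemma matching_forcing:
  assumes sg: "simple_graph V E" and nc: "\<not> has_cycle V E"
    and M: "matching_rel E M" and cov: "\<forall>x \<in> V - S. \<exists>y. M x y"
  shows "V \<subseteq> skew_closure V E S"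
proof (rule ccontr)
  assume "\<not> V \<subseteq> skew_closure V E S"
  then obtain x0 where x0: "x0 \<in> V" "x0 \<notin> skew_closure V E S" by blast
  let ?C = "skew_closure V E S"
  have fin: "finite V" and EV: "\<forall>x y. E x y \<longrightarrow> x \<in> V \<and> y \<in> V"
    and sym: "\<forall>x y. E x y \<longrightarrow> E y x" and irr: "\<forall>x. \<not> E x x"
    using sg unfolding simple_graph_def by auto
  have ME: "\<forall>x y. M x y \<longrightarrow> E x y" and Msym: "\<forall>x y. M x y \<longrightarrow> M y x"
    and Mun: "\<forall>x y z. M x y \<longrightarrow> M x z \<longrightarrow> y = z"
    using M unfolding matching_rel_def by auto
  have SC: "S \<subseteq> ?C" by (rule subsetI, rule skew_closure.init)
  define H where "H x y \<longleftrightarrow> (x \<notin> ?C \<and> M x y) \<or> (y \<notin> ?C \<and> E x y \<and> \<not> M x y)" for x y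
  have HE: "\<forall>x y. H x y \<longrightarrow> E x y" using ME unfolding H_def by blast
  obtain y0 where "M x0 y0" using cov x0 SC by blast
  then have Hab: "H x0 y0" using x0 unfolding H_def by blast
  have step: "\<forall>x y. H x y \<longrightarrow> (\<exists>z. H y z \<and> z \<noteq> x)"
  proof (intro allI impI)
    fix x y assume "H x y"
    then consider "x \<notin> ?C" "M x y" | "y \<notin> ?C" "E x y" "\<not> M x y" unfolding H_def by blast
    then show "\<exists>z. H y z \<and> z \<noteq> x"
    proof cases
      case 1
      have "E y x" using 1 ME sym by blast
      moreover have "y \<in> V" using 1 ME EV by blast
      ultimately obtain z where z: "E y z" "z \<noteq> x" "z \<notin> ?C" using stall[of y V E x S] 1 by blast
      have "\<not> M y z"
      proof
        assume "M y z"
        moreover have "M y x" using 1(2) Msym by blast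
        ultimately show False using z(2) Mun by blast
      qed
      then show ?thesis using z unfolding H_def by blast
    next
      case 2
      have "y \<in> V" using 2 EV by blast
      then obtain z where "M y z" using cov 2 SC by blast
      moreover have "z \<noteq> x" using 2 \<open>M y z\<close> Msym by blast
      ultimately show ?thesis using 2 unfolding H_def by blast
    qed
  qed
  have "has_cycle V E" by (rule cycle_lemma[OF fin EV irr HE Hab step])
  then show False using nc by blast
qed


lemma min_exact:
  assumes tr: "tree V E" and ms: "min_skew_forcing_set V E S"
  shows "\<exists>M. matching_rel E M \<and> {x. \<exists>y. M x y} = V - S"
proof -
  have sg: "simple_graph V E" and nc: "\<not> has_cycle V E" using tr unfolding tree_def by auto
  have fin: "finite V" and EV: "\<forall>x y. E x y \<longrightarrow> x \<in> V \<and> y \<in> V"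
    using sg unfolding simple_graph_def by auto
  have SV: "S \<subseteq> V" and cl: "V \<subseteq> skew_closure V E S"
    using ms unfolding min_skew_forcing_set_def skew_forcing_set_def by auto
  obtain M where M: "matching_rel E M" "\<forall>x \<in> V - S. \<exists>y. M x y"
    using forcing_matching[OF sg cl] by blast
  define S' where "S' = V - {x. \<exists>y. M x y}"
  have S'S: "S' \<subseteq> S" using M(2) unfolding S'_def by blast
  have "V \<subseteq> skew_closure V E S'"
    by (rule matching_forcing[OF sg nc M(1)]) (auto simp: S'_def)
  then have fs: "skew_forcing_set V E S'" unfolding skew_forcing_set_def S'_def by blast
  have finfam: "finite {S. skew_forcing_set V E S}"
    by (rule finite_subset[of _ "Pow V"]) (use fin in \<open>auto simp: skew_forcing_set_def\<close>)
  have "skew_zero_forcing_number V E \<le> card S'"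
    unfolding skew_zero_forcing_number_def using fs finfam by (intro Min_le) auto
  then have "card S \<le> card S'" using ms unfolding min_skew_forcing_set_def by simp
  moreover have "finite S" using SV fin finite_subset by blast
  ultimately have "S' = S" using S'S card_seteq by blast
  moreover have "{x. \<exists>y. M x y} \<subseteq> V"
    using M(1) EV unfolding matching_rel_def by blast
  ultimately have "{x. \<exists>y. M x y} = V - S" unfolding S'_def by blast
  then show ?thesis using M(1) by blast
qed

theorem theorem5p29:
  fixes V :: "'a set" and E :: "'a \<Rightarrow> 'a \<Rightarrow> bool"
  assumes "tree V E"
  shows "\<not> (\<exists>S1 S2. skew_TS_edge V E S1 S2)"
proof
  assume "\<exists>S1 S2. skew_TS_edge V E S1 S2"
  then obtain S1 S2 v1 v2 where m1: "min_skew_forcing_set V E S1" and m2: "min_skew_forcing_set V E S2"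
    and d1: "S1 - S2 = {v1}" and d2: "S2 - S1 = {v2}" and e: "E v1 v2"
    unfolding skew_TS_edge_def by blast
  have sg: "simple_graph V E" and nc: "\<not> has_cycle V E" using assms unfolding tree_def by auto
  have fin: "finite V" and EV: "\<forall>x y. E x y \<longrightarrow> x \<in> V \<and> y \<in> V"
    and sym: "\<forall>x y. E x y \<longrightarrow> E y x" and irr: "\<forall>x. \<not> E x x"
    using sg unfolding simple_graph_def by auto
  obtain M1 where M1: "matching_rel E M1" "{x. \<exists>y. M1 x y} = V - S1" using min_exact[OF assms m1] by blast
  obtain M2 where M2: "matching_rel E M2" "{x. \<exists>y. M2 x y} = V - S2" using min_exact[OF assms m2] by blast
  have M1E: "\<forall>x y. M1 x y \<longrightarrow> E x y" and M1s: "\<forall>x y. M1 x y \<longrightarrow> M1 y x"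
    and M1u: "\<forall>x y z. M1 x y \<longrightarrow> M1 x z \<longrightarrow> y = z"
    using M1(1) unfolding matching_rel_def by auto
  have M2E: "\<forall>x y. M2 x y \<longrightarrow> E x y" and M2s: "\<forall>x y. M2 x y \<longrightarrow> M2 y x"
    and M2u: "\<forall>x y z. M2 x y \<longrightarrow> M2 x z \<longrightarrow> y = z"
    using M2(1) unfolding matching_rel_def by auto
  have v1V: "v1 \<in> V" and v2V: "v2 \<in> V" using e EV by auto
  have "v1 \<in> S1" "v1 \<notin> S2" "v2 \<in> S2" "v2 \<notin> S1" using d1 d2 by auto
  have same: "\<And>x. x \<noteq> v1 \<Longrightarrow> x \<noteq> v2 \<Longrightarrow> (x \<in> S1 \<longleftrightarrow> x \<in> S2)" using d1 d2 by blast
  have c1: "\<And>x. (\<exists>y. M1 x y) \<longleftrightarrow> x \<in> V \<and> x \<notin> S1" using M1(2) by blast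
  have c2: "\<And>x. (\<exists>y. M2 x y) \<longleftrightarrow> x \<in> V \<and> x \<notin> S2" using M2(2) by blast
  define H where "H x y \<longleftrightarrow> (M1 x y \<and> \<not> M2 x y) \<or> (M2 x y \<and> \<not> M1 x y)
     \<or> (x = v1 \<and> y = v2) \<or> (x = v2 \<and> y = v1)" for x y
  have HE: "\<forall>x y. H x y \<longrightarrow> E x y" using M1E M2E e sym unfolding H_def by blast
  have Hab: "H v1 v2" unfolding H_def by blast
  have v12: "v1 \<noteq> v2" using e irr by blast
  have Hs: "\<And>x y. H x y \<Longrightarrow> H y x" using M1s M2s unfolding H_def by blast
  obtain p1 where p1: "M2 v1 p1" using c2 v1V \<open>v1 \<notin> S2\<close> by blast
  have np1: "\<not> M1 v1 p1" using c1 \<open>v1 \<in> S1\<close> by blast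
  have p1v2: "p1 \<noteq> v2" using p1 M2s c2 \<open>v2 \<in> S2\<close> by blast
  obtain p2 where p2: "M1 v2 p2" using c1 v2V \<open>v2 \<notin> S1\<close> by blast
  have np2: "\<not> M2 v2 p2" using c2 \<open>v2 \<in> S2\<close> by blast
  have p2v1: "p2 \<noteq> v1" using p2 M1s c1 \<open>v1 \<in> S1\<close> by blast
  have step: "\<forall>x y. H x y \<longrightarrow> (\<exists>z. H y z \<and> z \<noteq> x)"
  proof (intro allI impI)
    fix x y assume Hxy: "H x y"
    show "\<exists>z. H y z \<and> z \<noteq> x"
    proof (cases "y = v1")
      case True
      have "H v1 v2" "H v1 p1" using p1 np1 unfolding H_def by auto
      then show ?thesis using True p1v2 by metis
    next
      case nv1: False
      show ?thesis
      proof (cases "y = v2")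
        case True
        have "H v2 v1" "H v2 p2" using p2 np2 unfolding H_def by auto
        then show ?thesis using True p2v1 by metis
      next
        case nv2: False
        from Hxy nv1 nv2 consider "M1 x y" "\<not> M2 x y" | "M2 x y" "\<not> M1 x y" unfolding H_def by blast
        then show ?thesis
        proof cases
          case 1
          have "M1 y x" using 1 M1s by blast
          then have "y \<in> V \<and> y \<notin> S1" using c1 by blast
          then have "y \<in> V \<and> y \<notin> S2" using same nv1 nv2 by blast
          then obtain z where z: "M2 y z" using c2 by blast
          have "z \<noteq> x" using z 1 M2s by blast
          moreover have "\<not> M1 y z" using \<open>M1 y x\<close> M1u \<open>z \<noteq> x\<close> by blast
          ultimately show ?thesis using z unfolding H_def by blast
        next
          case 2
          have "M2 y x" using 2 M2s by blast
          then have "y \<in> V \<and> y \<notin> S2" using c2 by blast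
          then have "y \<in> V \<and> y \<notin> S1" using same nv1 nv2 by blast
          then obtain z where z: "M1 y z" using c1 by blast
          have "z \<noteq> x" using z 2 M1s by blast
          moreover have "\<not> M2 y z" using \<open>M2 y x\<close> M2u \<open>z \<noteq> x\<close> by blast
          ultimately show ?thesis using z unfolding H_def by blast
        qed
      qed
    qed
  qed
  have "has_cycle V E" by (rule cycle_lemma[OF fin EV irr HE Hab step])
  then show False using nc by blast
qed

end
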